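(* Let nonempty active action sets $A_{l,i}\subseteq\mathcal{A}$ be given for all $(l,i)\in[k]\times[H]$, and let $\eta$ be the random exploration policy in which, independently for each state $(l,i)$, the action $e_{l,i}$ is drawn uniformly at random from $A_{l,i}$. Let $Q_{l,i}$ be the probability that $\eta$ visits state $(l,i)$ (over the random actions and the random transitions). Then for any $i\in[H-1]$ and $l,s\in[k]$, $$Q_{s,i+1}\ \ge\ \max_{a\in A_{l,i}}\frac{Q_{l,i}}{A}\,p_i(s\mid l,a).$$
   Context: An episodic MDP has states $(l,i)$, $l\in[k]$, $i\in[H]$, start state $(1,1)$, and an action set $\mathcal{A}$ of size $A$. For $i\in[H-1]$, action $a$ at state $(l,i)$ moves to state $(s,i+1)$ with probability $p_i(s\mid l,a)$, independently of everything else. A (possibly randomized) policy that fixes an action at every state is executed from $(1,1)$ by taking the assigned action at each visited state. *)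

theory Defs
  imports "HOL-Probability.Probability"
begin

text \<open>States are pairs (l,i) with l in {1..k} (label) and i in {1..H} (level).
  P i l a is the next-label distribution p_i( . | l, a).
  An action assignment e maps each state (l,i) to an action.\<close>

text \<open>Distribution of the label at level n+1 when executing the deterministic
  action assignment e from state (1,1).\<close>
fun traj :: "(nat \<Rightarrow> nat \<Rightarrow> 'a \<Rightarrow> nat pmf) \<Rightarrow> (nat \<times> nat \<Rightarrow> 'a) \<Rightarrow> nat \<Rightarrow> nat pmf" where
  "traj P e 0 = return_pmf 1"
| "traj P e (Suc n) = bind_pmf (traj P e n) (\<lambda>l. P (Suc n) l (e (l, Suc n)))"

definition explore_policy :: "nat \<Rightarrow> nat \<Rightarrow> (nat \<Rightarrow> nat \<Rightarrow> 'a set) \<Rightarrow> (nat \<times> nat \<Rightarrow> 'a) pmf" where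
  "explore_policy k H Act =
     Pi_pmf ({1..k} \<times> {1..H}) undefined (\<lambda>(l, i). pmf_of_set (Act l i))"

text \<open>Q l i: probability that eta visits state (l,i) (level i is reached exactly
  once, at step i, so this is the probability that the label at level i is l).\<close>
definition visit_prob :: "nat \<Rightarrow> nat \<Rightarrow> (nat \<Rightarrow> nat \<Rightarrow> 'a set) \<Rightarrow>
    (nat \<Rightarrow> nat \<Rightarrow> 'a \<Rightarrow> nat pmf) \<Rightarrow> nat \<Rightarrow> nat \<Rightarrow> real" where
  "visit_prob k H Act P l i =
     measure_pmf.prob (bind_pmf (explore_policy k H Act) (\<lambda>e. traj P e (i - 1))) {l}"

end

theory Submission
  imports Defs
begin

lemma traj_cong: "(\<And>l j. j \<le> n \<Longrightarrow> e (l,j) = e' (l,j)) \<Longrightarrow> traj P e n = traj P e' n"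
  by (induction n) auto

lemma int_bdd1: "(\<And>x. 0 \<le> f x \<and> f x \<le> 1) \<Longrightarrow> integrable (measure_pmf M) (f::_\<Rightarrow>real)"
  by (intro measure_pmf.integrable_const_bound[where B=1]) auto

lemma point_le_int:
  fixes g :: "_ \<Rightarrow> real"
  assumes "\<And>x. 0 \<le> g x \<and> g x \<le> 1"
  shows "pmf M l * g l \<le> (\<integral>x. g x \<partial>measure_pmf M)"
proof -
  have "(\<integral>x. indicator {l} x * g x \<partial>measure_pmf M) = indicator {l} l * g l * pmf M l"
    by (subst integral_measure_pmf_real[where A="{l}"]) (auto simp: indicator_def split: if_splits)
  moreover have "(\<integral>x. indicator {l} x * g x \<partial>measure_pmf M) \<le> (\<integral>x. g x \<partial>measure_pmf M)"
    apply (rule integral_mono)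
      apply (rule int_bdd1) using assms apply (auto simp: indicator_def)[1]
     apply (rule int_bdd1) using assms apply auto[1]
    using assms by (auto simp: indicator_def)
  ultimately show ?thesis by (simp add: mult.commute)
qed

theorem lemma1:
  fixes k H :: nat and Acts :: "'a set" and Act :: "nat \<Rightarrow> nat \<Rightarrow> 'a set"
    and P :: "nat \<Rightarrow> nat \<Rightarrow> 'a \<Rightarrow> nat pmf"
  assumes "finite Acts"
    and "\<And>l i. l \<in> {1..k} \<Longrightarrow> i \<in> {1..H} \<Longrightarrow> Act l i \<subseteq> Acts \<and> Act l i \<noteq> {}"
    and "\<And>i l a. i \<in> {1..H-1} \<Longrightarrow> l \<in> {1..k} \<Longrightarrow> a \<in> Acts \<Longrightarrow> set_pmf (P i l a) \<subseteq> {1..k}"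
    and "i \<in> {1..H-1}" and "l \<in> {1..k}" and "s \<in> {1..k}"
  shows "visit_prob k H Act P s (i + 1)
           \<ge> (MAX a \<in> Act l i. visit_prob k H Act P l i / real (card Acts) * pmf (P i l a) s)"
proof -
  define I where "I = {1..k} \<times> {1..H}"
  define x where "x = (l, i)"
  define p where "p = (\<lambda>(l, i). pmf_of_set (Act l i))"
  define F where "F = Pi_pmf (I - {x}) undefined p"
  have xI: "x \<in> I" using assms(4,5) by (auto simp: I_def x_def)
  have finI: "finite I" by (simp add: I_def)
  have AS: "Act l i \<subseteq> Acts" "Act l i \<noteq> {}" using assms(2)[of l i] assms(4,5) by force+
  have finA: "finite (Act l i)" using AS assms(1) finite_subset by blast
  have cardle: "card (Act l i) \<le> card Acts" using AS assms(1) card_mono by blast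
  have cardpos: "card (Act l i) > 0" using AS finA by (simp add: card_gt_0_iff)
  have px: "p x = pmf_of_set (Act l i)" by (simp add: p_def x_def)
  have E: "explore_policy k H Act = do {y \<leftarrow> p x; f \<leftarrow> F; return_pmf (f(x := y))}"
  proof -
    have "I = insert x (I - {x})" using xI by blast
    hence "explore_policy k H Act = Pi_pmf (insert x (I - {x})) undefined p"
      by (simp add: explore_policy_def I_def p_def)
    also have "\<dots> = do {y \<leftarrow> p x; f \<leftarrow> F; return_pmf (f(x := y))}"
      unfolding F_def by (rule Pi_pmf_insert') (use finI in auto)
    finally show ?thesis .
  qed
  have tc: "traj P (f(x := y)) (i - 1) = traj P f (i - 1)" for f y
    by (rule traj_cong) (use assms(4) in \<open>auto simp: x_def\<close>)
  have gen: "\<And>n t. measure_pmf.prob (bind_pmf (explore_policy k H Act) (\<lambda>e. traj P e n)) {t}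
      = (\<integral>y. (\<integral>f. pmf (traj P (f(x := y)) n) t \<partial>F) \<partial>p x)"
    unfolding E by (simp add: measure_pmf_single bind_assoc_pmf bind_return_pmf pmf_bind)
  define Q' where "Q' = (\<integral>f. pmf (traj P f (i - 1)) l \<partial>F)"
  have Ql: "visit_prob k H Act P l i = Q'"
    unfolding visit_prob_def gen tc Q'_def by simp
  have inner: "Q' * pmf (P i l y) s \<le> (\<integral>f. pmf (traj P (f(x := y)) i) s \<partial>F)" for y
  proof -
    have "Q' * pmf (P i l y) s = (\<integral>f. pmf (traj P f (i - 1)) l * pmf (P i l y) s \<partial>F)"
      unfolding Q'_def by simp
    also have "\<dots> \<le> (\<integral>f. pmf (traj P (f(x := y)) i) s \<partial>F)"
    proof (rule integral_mono)
      show "integrable (measure_pmf F) (\<lambda>f. pmf (traj P f (i - 1)) l * pmf (P i l y) s)"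
        by (rule int_bdd1) (auto simp: pmf_le_1 mult_le_one)
      show "integrable (measure_pmf F) (\<lambda>f. pmf (traj P (f(x := y)) i) s)"
        by (rule int_bdd1) (auto simp: pmf_le_1)
      fix f
      have iS: "i = Suc (i - 1)" using assms(4) by auto
      have "pmf (traj P (f(x := y)) i) s =
          (\<integral>l'. pmf (P i l' ((f(x := y)) (l', i))) s \<partial>traj P (f(x := y)) (i - 1))"
      proof -
        have "traj P e i = bind_pmf (traj P e (i - 1)) (\<lambda>l'. P i l' (e (l', i)))" for e
          using iS by (metis traj.simps(2))
        thus ?thesis by (simp only: pmf_bind)
      qed
      also have "\<dots> \<ge> pmf (traj P (f(x := y)) (i - 1)) l * pmf (P i l ((f(x := y)) (l, i))) s"
        by (rule point_le_int) (auto simp: pmf_le_1)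
      finally show "pmf (traj P f (i - 1)) l * pmf (P i l y) s \<le> pmf (traj P (f(x := y)) i) s"
        by (simp only: tc) (simp add: x_def)
    qed
    finally show ?thesis .
  qed
  have Qs: "visit_prob k H Act P s (i + 1) =
      (\<Sum>y\<in>Act l i. (\<integral>f. pmf (traj P (f(x := y)) i) s \<partial>F)) / card (Act l i)"
    unfolding visit_prob_def gen px using finA AS by (simp add: integral_pmf_of_set)
  have Q'nn: "Q' \<ge> 0" unfolding Q'_def by (simp add: integral_nonneg)
  show ?thesis
  proof (subst Max_le_iff)
    show "finite ((\<lambda>a. visit_prob k H Act P l i / real (card Acts) * pmf (P i l a) s) ` Act l i)"
      using finA by simp
    show "(\<lambda>a. visit_prob k H Act P l i / real (card Acts) * pmf (P i l a) s) ` Act l i \<noteq> {}"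
      using AS by simp
    show "\<forall>a\<in>(\<lambda>a. visit_prob k H Act P l i / real (card Acts) * pmf (P i l a) s) ` Act l i.
        a \<le> visit_prob k H Act P s (i + 1)"
    proof
      fix b assume "b \<in> (\<lambda>a. visit_prob k H Act P l i / real (card Acts) * pmf (P i l a) s) ` Act l i"
      then obtain a where a: "a \<in> Act l i" and b: "b = Q' / real (card Acts) * pmf (P i l a) s"
        using Ql by auto
      have "b \<le> Q' * pmf (P i l a) s / card (Act l i)"
        unfolding b using cardle cardpos Q'nn
        by (simp add: divide_simps mult_left_mono mult_right_mono)
      also have "\<dots> \<le> (\<integral>f. pmf (traj P (f(x := a)) i) s \<partial>F) / card (Act l i)"
        using inner[of a] by (simp add: divide_right_mono)
      also have "\<dots> \<le> (\<Sum>y\<in>Act l i. (\<integral>f. pmf (traj P (f(x := y)) i) s \<partial>F)) / card (Act l i)"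
        by (intro divide_right_mono member_le_sum a finA integral_nonneg) auto
      finally show "b \<le> visit_prob k H Act P s (i + 1)" using Qs by simp
    qed
  qed
qed

end
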